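(* Let $S=(S_n)_{n\in\mathbb N}$ be the simple random walk on $\mathbb Z^d$ started at $0$, on $(\Sigma,\mathcal E,\mathbf P)$, and let $\eta=(\eta(n,x))_{(n,x)\in\mathbb N\times\mathbb Z^d}$ be i.i.d. non-constant real random variables on $(\Omega,\mathcal F,\mathbb P)$. Let $\beta>0$, assume $\mathbb E e^{\beta|\eta(0,0)|}<\infty$, and let $\lambda(s)=\ln\mathbb E e^{s\eta(0,0)}$. Let $H_n(S)=\sum_{j=1}^n\eta(j,S_j)$. Let $n\ge1$, let $f_n$ be a bounded nonnegative function on $\mathbb R^d$ with $\mathbf P(f_n(S_n)>0)\ne0$, and $Y_n=\mathbf E\big[f_n(S_n)e^{\beta H_n(S)}\big]$. Let $\mathcal F_0$ be trivial, $\mathcal F_j=\sigma(\eta(i,x):1\le i\le j,\ x\in\mathbb Z^d)$, $\mathbb E_j=\mathbb E(\cdot\mid\mathcal F_j)$ and $V_{n,j}=\mathbb E_j\ln Y_n-\mathbb E_{j-1}\ln Y_n$. Then for every $1\le j\le n$, $$\mathbb E_{j-1}\exp(|V_{n,j}|)\le K:=2\exp(\lambda(\beta)+\lambda(-\beta))\quad\text{a.s.}$$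
   Context: $\mathbf E$ is expectation with respect to $\mathbf P$ (walk, environment fixed), $\mathbb E$ with respect to $\mathbb P$ (environment). *)

theory Defs
  imports "HOL-Probability.Probability"
begin

definition srw_steps :: "(int ^ 'd) set" where
  "srw_steps = {v. \<exists>i. v = axis i 1 \<or> v = axis i (-1)}"

definition srw_paths :: "nat \<Rightarrow> (int ^ 'd::finite) list pmf" where
  "srw_paths n = pmf_of_set {xs. length xs = n \<and> set xs \<subseteq> srw_steps}"

definition srw_pos :: "(int ^ 'd) list \<Rightarrow> nat \<Rightarrow> int ^ 'd" where
  "srw_pos xs j = sum_list (take j xs)"

definition emb :: "int ^ 'd \<Rightarrow> real ^ 'd" where
  "emb z = (\<chi> i. real_of_int (z $ i))"

definition Hn :: "(nat \<Rightarrow> int ^ 'd \<Rightarrow> 'a \<Rightarrow> real) \<Rightarrow> nat \<Rightarrow> (int ^ 'd) list \<Rightarrow> 'a \<Rightarrow> real" where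
  "Hn \<eta> n xs \<omega> = (\<Sum>j = 1..n. \<eta> j (srw_pos xs j) \<omega>)"

definition Yn :: "(nat \<Rightarrow> int ^ 'd::finite \<Rightarrow> 'a \<Rightarrow> real) \<Rightarrow> real \<Rightarrow> (real ^ 'd \<Rightarrow> real) \<Rightarrow> nat \<Rightarrow> 'a \<Rightarrow> real" where
  "Yn \<eta> \<beta> f n \<omega> = measure_pmf.expectation (srw_paths n)
      (\<lambda>xs. f (emb (srw_pos xs n)) * exp (\<beta> * Hn \<eta> n xs \<omega>))"

definition envF :: "'a measure \<Rightarrow> (nat \<Rightarrow> int ^ 'd \<Rightarrow> 'a \<Rightarrow> real) \<Rightarrow> nat \<Rightarrow> 'a measure" where
  "envF M \<eta> j = sigma (space M)
     (\<Union>i\<in>{1..j}. \<Union>x. {\<eta> i x -` A \<inter> space M | A. A \<in> sets borel})"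

definition lam :: "'a measure \<Rightarrow> (nat \<Rightarrow> int ^ 'd \<Rightarrow> 'a \<Rightarrow> real) \<Rightarrow> real \<Rightarrow> real" where
  "lam M \<eta> s = ln (\<integral>\<omega>. exp (s * \<eta> 0 0 \<omega>) \<partial>M)"

end

theory Submission
  imports Defs
begin

lemma nn_real_cond_exp:
  assumes P: "prob_space M" and sF: "subalgebra M F" and hi: "integrable M h" and hp: "\<And>x. h x \<ge> 0"
  shows "AE x in M. nn_cond_exp M F (\<lambda>x. ennreal (h x)) x = ennreal (real_cond_exp M F h x)"
proof -
  interpret prob_space M by fact
  interpret sigma_finite_subalgebra M F
    by (rule finite_measure_subalgebra_is_sigma_finite) (unfold_locales, fact sF)
  have [measurable]: "h \<in> borel_measurable M" using hi by auto
  have "(\<integral>\<^sup>+x. nn_cond_exp M F (\<lambda>x. ennreal (h x)) x \<partial>M) = (\<integral>\<^sup>+x. ennreal (h x) \<partial>M)"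
    using nn_cond_exp_intg[of "\<lambda>_. 1" "\<lambda>x. ennreal (h x)"] by simp
  also have "... < \<infinity>" using integrableD(2)[OF hi] hp by (simp add: less_top)
  finally have fin: "AE x in M. nn_cond_exp M F (\<lambda>x. ennreal (h x)) x \<noteq> \<infinity>"
    by (intro nn_integral_PInf_AE) auto
  have z: "(\<lambda>x. ennreal (- h x)) = (\<lambda>x. 0)" using hp by (auto intro!: ext ennreal_neg)
  have "AE x in M. (\<lambda>x. 0) x = nn_cond_exp M F (\<lambda>x. 0) x"
    by (rule nn_cond_exp_F_meas) simp
  then show ?thesis using fin unfolding real_cond_exp_def z
    by eventually_elim (auto simp: ennreal_enn2real_if)
qed

lemma indep_var_from_sets:
  assumes P: "prob_space M"
    and ind: "prob_space.indep_set M (sets S) (sets T)"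
    and sS: "subalgebra M S" and sT: "subalgebra M T"
    and X: "X \<in> borel_measurable S" and Y: "Y \<in> borel_measurable T"
  shows "prob_space.indep_var M borel X borel (Y :: _ \<Rightarrow> real)"
proof -
  interpret prob_space M by fact
  have XM: "X \<in> borel_measurable M" using measurable_from_subalg[OF sS X] .
  have YM: "Y \<in> borel_measurable M" using measurable_from_subalg[OF sT Y] .
  have a: "sigma_sets (space M) {X -` A \<inter> space M | A. A \<in> sets borel} \<subseteq> sets S"
  proof -
    have sp: "space S = space M" using sS by (simp add: subalgebra_def)
    have "{X -` A \<inter> space M |A. A \<in> sets borel} \<subseteq> sets S"
      using X sp by (auto simp: measurable_sets[of _ S, unfolded sp])
    from sets.sigma_sets_subset[OF this] show ?thesis unfolding sp .
  qed
  have b: "sigma_sets (space M) {Y -` A \<inter> space M | A. A \<in> sets borel} \<subseteq> sets T"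
  proof -
    have sp: "space T = space M" using sT by (simp add: subalgebra_def)
    have "{Y -` A \<inter> space M |A. A \<in> sets borel} \<subseteq> sets T"
      using Y sp by (auto simp: measurable_sets[of _ T, unfolded sp])
    from sets.sigma_sets_subset[OF this] show ?thesis unfolding sp .
  qed
  show ?thesis unfolding indep_var_eq
    using XM YM ind a b unfolding indep_set_def
    apply (simp add: XM YM)
    apply (erule indep_sets_mono_sets)
    apply (auto split: bool.split)
    done
qed

lemma cond_exp_indep_K2:
  assumes P: "prob_space M" and sG: "subalgebra M G" and sGH: "subalgebra M GH" and sA: "subalgebra M A"
    and GGH: "sets G \<subseteq> sets GH"
    and ind: "prob_space.indep_set M (sets GH) (sets A)"
    and u: "u \<in> borel_measurable GH" "integrable M u"
    and v: "v \<in> borel_measurable A" "integrable M v"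
  shows "integrable M (\<lambda>x. u x * v x)"
    "AE x in M. real_cond_exp M G (\<lambda>x. u x * v x) x = real_cond_exp M G u x * (\<integral>x. v x \<partial>M)"
proof -
  interpret prob_space M by fact
  interpret sigma_finite_subalgebra M G
    by (rule finite_measure_subalgebra_is_sigma_finite) (unfold_locales, fact sG)
  have spGH: "space GH = space M" using sGH by (simp add: subalgebra_def)
  have spG: "space G = space M" using sG by (simp add: subalgebra_def)
  show uv: "integrable M (\<lambda>x. u x * v x)"
    by (rule indep_var_integrable[OF indep_var_from_sets[OF P ind sGH sA u(1) v(1)] u(2) v(2)])
  have [measurable]: "u \<in> borel_measurable M" "v \<in> borel_measurable M" using u v by auto
  show "AE x in M. real_cond_exp M G (\<lambda>x. u x * v x) x = real_cond_exp M G u x * (\<integral>x. v x \<partial>M)"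
  proof (rule real_cond_exp_charact)
    fix S assume S: "S \<in> sets G"
    then have SM: "S \<in> sets M" using sG by (auto simp: subalgebra_def)
    have SGH: "S \<in> sets GH" using S GGH by auto
    have im: "(\<lambda>x. indicator S x * u x) \<in> borel_measurable GH"
      using u(1) SGH by measurable
    have iu: "integrable M (\<lambda>x. indicator S x * u x)"
      using integrable_mult_indicator[OF SM u(2)] by simp
    have "(\<integral>x\<in>S. u x * v x \<partial>M) = (\<integral>x. (indicator S x * u x) * v x \<partial>M)"
      unfolding set_lebesgue_integral_def by (simp add: mult.assoc)
    also have "... = (\<integral>x. indicator S x * u x \<partial>M) * (\<integral>x. v x \<partial>M)"
      by (rule indep_var_lebesgue_integral[OF indep_var_from_sets[OF P ind sGH sA im v(1)] iu v(2)])
    also have "(\<integral>x. indicator S x * u x \<partial>M) = (\<integral>x\<in>S. u x \<partial>M)"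
      unfolding set_lebesgue_integral_def by simp
    also have "... = (\<integral>x\<in>S. real_cond_exp M G u x \<partial>M)"
      by (rule real_cond_exp_intA[OF u(2) S])
    also have "(\<integral>x\<in>S. real_cond_exp M G u x \<partial>M) * (\<integral>x. v x \<partial>M)
        = (\<integral>x\<in>S. real_cond_exp M G u x * (\<integral>x. v x \<partial>M) \<partial>M)"
      unfolding set_lebesgue_integral_def real_scaleR_def mult.assoc[symmetric] by simp
    finally show "(\<integral>x\<in>S. u x * v x \<partial>M) = (\<integral>x\<in>S. real_cond_exp M G u x * (\<integral>x. v x \<partial>M) \<partial>M)" .
  next
    show "integrable M (\<lambda>x. real_cond_exp M G u x * (\<integral>x. v x \<partial>M))"
      using real_cond_exp_int(1)[OF u(2)] by simp
  qed (use uv in auto)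
qed

lemma cond_exp_indep_K1:
  assumes P: "prob_space M" and sG: "subalgebra M G" and sGH: "subalgebra M GH" and sA: "subalgebra M A"
    and sF: "subalgebra M F"
    and GGH: "sets G \<subseteq> sets GH"
    and ind: "prob_space.indep_set M (sets GH) (sets A)"
    and Fgen: "sets F = sigma_sets (space M) {g \<inter> a | g a. g \<in> sets G \<and> a \<in> sets A}"
    and u: "u \<in> borel_measurable GH" "integrable M u"
    and v: "v \<in> borel_measurable A" "integrable M v"
  shows "AE x in M. real_cond_exp M F (\<lambda>x. u x * v x) x = real_cond_exp M G u x * v x"
proof -
  interpret prob_space M by fact
  interpret sigma_finite_subalgebra M F
    by (rule finite_measure_subalgebra_is_sigma_finite) (unfold_locales, fact sF)
  interpret G: sigma_finite_subalgebra M G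
    by (rule finite_measure_subalgebra_is_sigma_finite) (unfold_locales, fact sG)
  have spGH: "space GH = space M" using sGH by (simp add: subalgebra_def)
  have spG: "space G = space M" using sG by (simp add: subalgebra_def)
  have spA: "space A = space M" using sA by (simp add: subalgebra_def)
  have spF: "space F = space M" using sF by (simp add: subalgebra_def)
  define w where "w = real_cond_exp M G u"
  have wG: "w \<in> borel_measurable G" unfolding w_def by simp
  have wGH: "w \<in> borel_measurable GH"
    using wG measurable_mono[of borel borel G GH] GGH spG spGH by auto
  have wi: "integrable M w" unfolding w_def by (rule G.real_cond_exp_int(1)[OF u(2)])
  have uv: "integrable M (\<lambda>x. u x * v x)"
    by (rule indep_var_integrable[OF indep_var_from_sets[OF P ind sGH sA u(1) v(1)] u(2) v(2)])
  have wv: "integrable M (\<lambda>x. w x * v x)"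
    by (rule indep_var_integrable[OF indep_var_from_sets[OF P ind sGH sA wGH v(1)] wi v(2)])
  define E where "E = {g \<inter> a | g a. g \<in> sets G \<and> a \<in> sets A}"
  have EM: "E \<subseteq> sets M" unfolding E_def using sG sA by (auto simp: subalgebra_def)
  have GF: "sets G \<subseteq> sets F"
  proof
    fix g assume "g \<in> sets G"
    moreover have "space M \<in> sets A" using sA sets.top[of A] by (simp add: subalgebra_def)
    moreover have "g \<subseteq> space M" using \<open>g \<in> sets G\<close> sets.sets_into_space spG by blast
    ultimately have "g \<in> E" unfolding E_def using Int_absorb2[of g "space M"] by blast
    then show "g \<in> sets F" unfolding Fgen E_def[symmetric] by auto
  qed
  have AF: "sets A \<subseteq> sets F"
  proof
    fix g assume "g \<in> sets A"
    moreover have "space M \<in> sets G" using sG sets.top[of G] by (simp add: subalgebra_def)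
    moreover have "g \<subseteq> space M" using \<open>g \<in> sets A\<close> sets.sets_into_space spA by blast
    ultimately have "g \<in> E" unfolding E_def using Int_absorb1[of g "space M"] by blast
    then show "g \<in> sets F" unfolding Fgen E_def[symmetric] by auto
  qed
  have wF: "w \<in> borel_measurable F"
    using wG measurable_mono[of borel borel G F] GF spG spF by auto
  have vF: "v \<in> borel_measurable F"
    using v(1) measurable_mono[of borel borel A F] AF spA spF by auto
  have [measurable]: "u \<in> borel_measurable M" "v \<in> borel_measurable M" "w \<in> borel_measurable M"
    using u v wi by auto
  have basicE: "(\<integral>x\<in>g \<inter> a. u x * v x \<partial>M) = (\<integral>x\<in>g \<inter> a. w x * v x \<partial>M)"
    if g: "g \<in> sets G" and a: "a \<in> sets A" for g a
  proof -
    have gM: "g \<in> sets M" using g sG by (auto simp: subalgebra_def)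
    have aM: "a \<in> sets M" using a sA by (auto simp: subalgebra_def)
    have gGH: "g \<in> sets GH" using g GGH by auto
    have im1: "(\<lambda>x. indicator g x * u x) \<in> borel_measurable GH" using u(1) gGH by measurable
    have im2: "(\<lambda>x. indicator g x * w x) \<in> borel_measurable GH" using wGH gGH by measurable
    have im3: "(\<lambda>x. indicator a x * v x) \<in> borel_measurable A" using v(1) a by measurable
    have i1: "integrable M (\<lambda>x. indicator g x * u x)" using integrable_mult_indicator[OF gM u(2)] by simp
    have i2: "integrable M (\<lambda>x. indicator g x * w x)" using integrable_mult_indicator[OF gM wi] by simp
    have i3: "integrable M (\<lambda>x. indicator a x * v x)" using integrable_mult_indicator[OF aM v(2)] by simp
    have "(\<integral>x\<in>g \<inter> a. u x * v x \<partial>M) = (\<integral>x. (indicator g x * u x) * (indicator a x * v x) \<partial>M)"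
      unfolding set_lebesgue_integral_def by (intro Bochner_Integration.integral_cong) (auto simp: indicator_def)
    also have "... = (\<integral>x. indicator g x * u x \<partial>M) * (\<integral>x. indicator a x * v x \<partial>M)"
      by (rule indep_var_lebesgue_integral[OF indep_var_from_sets[OF P ind sGH sA im1 im3] i1 i3])
    also have "(\<integral>x. indicator g x * u x \<partial>M) = (\<integral>x. indicator g x * w x \<partial>M)"
      using G.real_cond_exp_intA[OF u(2) g] unfolding set_lebesgue_integral_def w_def by simp
    also have "(\<integral>x. indicator g x * w x \<partial>M) * (\<integral>x. indicator a x * v x \<partial>M)
        = (\<integral>x. (indicator g x * w x) * (indicator a x * v x) \<partial>M)"
      by (rule indep_var_lebesgue_integral[OF indep_var_from_sets[OF P ind sGH sA im2 im3] i2 i3, symmetric])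
    also have "... = (\<integral>x\<in>g \<inter> a. w x * v x \<partial>M)"
      unfolding set_lebesgue_integral_def by (intro Bochner_Integration.integral_cong) (auto simp: indicator_def)
    finally show ?thesis .
  qed
  have whole: "(\<integral>x. u x * v x \<partial>M) = (\<integral>x. w x * v x \<partial>M)"
  proof -
    have "space M \<in> sets G" "space M \<in> sets A"
      using sG sA sets.top[of G] sets.top[of A] by (auto simp: subalgebra_def)
    from basicE[OF this] show ?thesis
      unfolding set_lebesgue_integral_def by (simp add: indicator_def cong: Bochner_Integration.integral_cong)
  qed
  have stable: "Int_stable E"
    unfolding E_def Int_stable_def
  proof (clarify)
    fix g1 a1 g2 a2 assume "g1 \<in> sets G" "a1 \<in> sets A" "g2 \<in> sets G" "a2 \<in> sets A"
    then show "\<exists>g a. g1 \<inter> a1 \<inter> (g2 \<inter> a2) = g \<inter> a \<and> g \<in> sets G \<and> a \<in> sets A"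
      by (intro exI[of _ "g1 \<inter> g2"] exI[of _ "a1 \<inter> a2"]) auto
  qed
  have EP: "E \<subseteq> Pow (space M)" using EM sets.sets_into_space by auto
  have main: "(\<integral>x\<in>S. u x * v x \<partial>M) = (\<integral>x\<in>S. w x * v x \<partial>M)" if S: "S \<in> sets F" for S
  proof -
    have "S \<in> sigma_sets (space M) E" using S unfolding Fgen E_def .
    with stable EP show ?thesis
    proof (induct rule: sigma_sets_induct_disjoint)
      case (basic S) then show ?case using basicE unfolding E_def by auto
    next
      case empty then show ?case by (simp add: set_lebesgue_integral_def)
    next
      case (compl S)
      have SM: "S \<in> sets M" using compl(1) sets.sigma_sets_subset[OF EM] by auto
      have eq: "\<And>f :: _ \<Rightarrow> real. integrable M f \<Longrightarrow> (\<integral>x\<in>space M - S. f x \<partial>M) = (\<integral>x. f x \<partial>M) - (\<integral>x\<in>S. f x \<partial>M)"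
      proof -
        fix f :: "_ \<Rightarrow> real" assume fi: "integrable M f"
        have "(\<integral>x\<in>space M - S. f x \<partial>M) = (\<integral>x. f x - indicator S x * f x \<partial>M)"
          unfolding set_lebesgue_integral_def
          by (intro Bochner_Integration.integral_cong) (auto simp: indicator_def)
        also have "... = (\<integral>x. f x \<partial>M) - (\<integral>x\<in>S. f x \<partial>M)"
          unfolding set_lebesgue_integral_def
          using integrable_mult_indicator[OF SM fi] fi by simp
        finally show "(\<integral>x\<in>space M - S. f x \<partial>M) = (\<integral>x. f x \<partial>M) - (\<integral>x\<in>S. f x \<partial>M)" .
      qed
      show ?case using eq[OF uv] eq[OF wv] whole compl(2) by simp
    next
      case (union S)
      have SM: "\<And>i. S i \<in> sets M" using union(2) sets.sigma_sets_subset[OF EM] by auto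
      have disj: "\<And>i j. i \<noteq> j \<Longrightarrow> S i \<inter> S j = {}" using union(1) by (auto simp: disjoint_family_on_def)
      have UM: "(\<Union>i. S i) \<in> sets M" using SM by auto
      have si1: "set_integrable M (\<Union>i. S i) (\<lambda>x. u x * v x)"
        unfolding set_integrable_def using integrable_mult_indicator[OF UM uv] by simp
      have si2: "set_integrable M (\<Union>i. S i) (\<lambda>x. w x * v x)"
        unfolding set_integrable_def using integrable_mult_indicator[OF UM wv] by simp
      show ?case
        using lebesgue_integral_countable_add[OF SM disj si1] lebesgue_integral_countable_add[OF SM disj si2]
          union(3) by simp
    qed
  qed
  show ?thesis unfolding w_def[symmetric]
  proof (rule real_cond_exp_charact)
    fix S assume "S \<in> sets F" then show "(\<integral>x\<in>S. u x * v x \<partial>M) = (\<integral>x\<in>S. w x * v x \<partial>M)"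
      by (rule main)
  qed (use uv wv wF vF in auto)
qed

definition lay :: "'a measure \<Rightarrow> (nat \<Rightarrow> int ^ 'd \<Rightarrow> 'a \<Rightarrow> real) \<Rightarrow> nat set \<Rightarrow> 'a measure" where
  "lay M \<eta> L = sigma (space M) (\<Union>i\<in>L. \<Union>x. {\<eta> i x -` A \<inter> space M | A. A \<in> sets borel})"

lemma envF_lay: "envF M \<eta> j = lay M \<eta> {1..j}"
  by (simp add: envF_def lay_def)

context
  fixes M :: "'a measure" and \<eta> :: "nat \<Rightarrow> int ^ 'd \<Rightarrow> 'a \<Rightarrow> real"
  assumes rv: "\<And>m x. \<eta> m x \<in> borel_measurable M"
begin

lemma lay_gen_sub: "(\<Union>i\<in>L. \<Union>x. {\<eta> i x -` A \<inter> space M | A. A \<in> sets borel}) \<subseteq> sets M"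
  using rv by (auto simp: measurable_sets)

lemma lay_gen_pow: "(\<Union>i\<in>L. \<Union>x. {\<eta> i x -` A \<inter> space M | A. A \<in> sets borel}) \<subseteq> Pow (space M)"
  by auto

lemma lay_sets: "sets (lay M \<eta> L) = sigma_sets (space M) (\<Union>i\<in>L. \<Union>x. {\<eta> i x -` A \<inter> space M | A. A \<in> sets borel})"
  unfolding lay_def by (rule sets_measure_of[OF lay_gen_pow])

lemma lay_space: "space (lay M \<eta> L) = space M"
  unfolding lay_def by (rule space_measure_of[OF lay_gen_pow])

lemma lay_sub: "subalgebra M (lay M \<eta> L)"
  unfolding subalgebra_def lay_space lay_sets
  using sets.sigma_sets_subset[OF lay_gen_sub] by simp

lemma lay_meas: "i \<in> L \<Longrightarrow> \<eta> i x \<in> borel_measurable (lay M \<eta> L)"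
  apply (rule measurableI)
  using rv apply (simp add: measurable_space)
  unfolding lay_space lay_sets
  apply (rule sigma_sets.Basic) by blast

lemma lay_mono: "L \<subseteq> L' \<Longrightarrow> sets (lay M \<eta> L) \<subseteq> sets (lay M \<eta> L')"
  unfolding lay_sets by (rule sigma_sets_mono') auto

lemma lay_Un: "sets (lay M \<eta> (L \<union> L')) = sigma_sets (space M) {g \<inter> a | g a. g \<in> sets (lay M \<eta> L) \<and> a \<in> sets (lay M \<eta> L')}"
proof
  let ?E = "{g \<inter> a | g a. g \<in> sets (lay M \<eta> L) \<and> a \<in> sets (lay M \<eta> L')}"
  have EE: "?E \<subseteq> sets (lay M \<eta> (L \<union> L'))"
  proof clarify
    fix g a assume "g \<in> sets (lay M \<eta> L)" "a \<in> sets (lay M \<eta> L')"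
    then have "g \<in> sets (lay M \<eta> (L \<union> L'))" "a \<in> sets (lay M \<eta> (L \<union> L'))"
      using lay_mono[of L "L \<union> L'"] lay_mono[of L' "L \<union> L'"] by auto
    then show "g \<inter> a \<in> sets (lay M \<eta> (L \<union> L'))" by auto
  qed
  show "sigma_sets (space M) ?E \<subseteq> sets (lay M \<eta> (L \<union> L'))"
    using sets.sigma_sets_subset[OF EE] unfolding lay_space .
  show "sets (lay M \<eta> (L \<union> L')) \<subseteq> sigma_sets (space M) ?E"
    unfolding lay_sets[of "L \<union> L'"]
  proof (rule sigma_sets_mono)
    show "(\<Union>i\<in>L \<union> L'. \<Union>x. {\<eta> i x -` A \<inter> space M |A. A \<in> sets borel}) \<subseteq> sigma_sets (space M) ?E"
    proof
      fix S assume "S \<in> (\<Union>i\<in>L \<union> L'. \<Union>x. {\<eta> i x -` A \<inter> space M |A. A \<in> sets borel})"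
      then obtain i x B where S: "S = \<eta> i x -` B \<inter> space M" "B \<in> sets borel" "i \<in> L \<or> i \<in> L'" by auto
      have Sl: "S \<in> sets (lay M \<eta> L)" if "i \<in> L"
        unfolding lay_sets using S that by (intro sigma_sets.Basic) blast
      have Sl': "S \<in> sets (lay M \<eta> L')" if "i \<in> L'"
        unfolding lay_sets using S that by (intro sigma_sets.Basic) blast
      have top: "space M \<in> sets (lay M \<eta> L)" "space M \<in> sets (lay M \<eta> L')"
        using sets.top[of "lay M \<eta> L"] sets.top[of "lay M \<eta> L'"] by (auto simp: lay_space)
      have "S \<subseteq> space M" using S by auto
      then have "S \<in> ?E"
        using S(3) Sl Sl' top Int_absorb1[of S "space M"] Int_absorb2[of S "space M"] by blast
      then show "S \<in> sigma_sets (space M) ?E" by (rule sigma_sets.Basic)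
    qed
  qed
qed

lemma lay_indep:
  assumes P: "prob_space M"
    and indep: "prob_space.indep_vars M (\<lambda>_. borel) (\<lambda>(m, x). \<eta> m x) UNIV"
    and disj: "L \<inter> L' = {}"
  shows "prob_space.indep_set M (sets (lay M \<eta> L)) (sets (lay M \<eta> L'))"
proof -
  interpret prob_space M by fact
  define E where "E = (\<lambda>i. {(\<lambda>(m, x). \<eta> m x) i -` A \<inter> space M | A. A \<in> sets borel})"
  have ind: "indep_sets E UNIV" using indep unfolding indep_vars_def2 E_def by simp
  define I where "I = (\<lambda>b. if b then L \<times> (UNIV :: (int ^ 'd) set) else L' \<times> UNIV)"
  have "indep_sets (\<lambda>b. sigma_sets (space M) (\<Union>i\<in>I b. E i)) UNIV"
  proof (rule indep_sets_collect_sigma)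
    show "indep_sets E (\<Union>j\<in>UNIV. I j)" by (rule indep_sets_mono_index[OF _ ind]) simp
    show "disjoint_family_on I UNIV" using disj unfolding disjoint_family_on_def I_def by auto
    fix i :: "nat \<times> (int ^ 'd)" and b :: bool
    show "Int_stable (E i)"
      unfolding Int_stable_def E_def
    proof clarify
      fix A B :: "real set" assume "A \<in> sets borel" "B \<in> sets borel"
      then show "\<exists>C. (\<lambda>(m, x). \<eta> m x) i -` A \<inter> space M \<inter> ((\<lambda>(m, x). \<eta> m x) i -` B \<inter> space M) =
         (\<lambda>(m, x). \<eta> m x) i -` C \<inter> space M \<and> C \<in> sets borel"
        by (intro exI[of _ "A \<inter> B"]) auto
    qed
  qed
  moreover have "sigma_sets (space M) (\<Union>i\<in>I b. E i) = (case b of True \<Rightarrow> sets (lay M \<eta> L) | False \<Rightarrow> sets (lay M \<eta> L'))" for b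
    unfolding lay_sets I_def E_def
    by (cases b; simp; rule arg_cong[where f="sigma_sets (space M)"]; force)
  ultimately show ?thesis unfolding indep_set_def by simp
qed

end

lemma conv_lo:
  fixes q g :: "'b \<Rightarrow> real"
  assumes "finite S" "\<And>p. p \<in> S \<Longrightarrow> 0 \<le> q p" "sum q S = 1"
    "\<And>p. p \<in> S \<Longrightarrow> a \<le> g p"
  shows "a \<le> (\<Sum>p\<in>S. q p * g p)"
proof -
  have "(\<Sum>p\<in>S. q p * a) \<le> (\<Sum>p\<in>S. q p * g p)"
    by (rule sum_mono) (simp add: assms mult_left_mono)
  then show "a \<le> (\<Sum>p\<in>S. q p * g p)" using assms(3) by (simp add: sum_distrib_right[symmetric])
qed

lemma conv_hi:
  fixes q g :: "'b \<Rightarrow> real"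
  assumes "finite S" "\<And>p. p \<in> S \<Longrightarrow> 0 \<le> q p" "sum q S = 1"
    "\<And>p. p \<in> S \<Longrightarrow> g p \<le> b"
  shows "(\<Sum>p\<in>S. q p * g p) \<le> b"
proof -
  have "(\<Sum>p\<in>S. q p * g p) \<le> (\<Sum>p\<in>S. q p * b)"
    by (rule sum_mono) (simp add: assms mult_left_mono)
  then show "(\<Sum>p\<in>S. q p * g p) \<le> b" using assms(3) by (simp add: sum_distrib_right[symmetric])
qed

lemma inv_sum_le:
  fixes q g :: "'b \<Rightarrow> real"
  assumes "finite S" "S \<noteq> {}" "\<And>p. p \<in> S \<Longrightarrow> 0 \<le> q p" "sum q S = 1"
    "\<And>p. p \<in> S \<Longrightarrow> 0 < g p"
  shows "inverse (\<Sum>p\<in>S. q p * g p) \<le> (\<Sum>p\<in>S. q p * inverse (g p))"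
  using convex_on_sum[OF assms(1,2) convex_on_inverse[of "{0<..}"] assms(4), of g] assms by simp

lemma jensen_exp:
  assumes P: "prob_space M" and sF: "subalgebra M F" and X: "integrable M X"
    and eX: "integrable M (\<lambda>x. exp (X x))"
  shows "AE x in M. exp (real_cond_exp M F X x) \<le> real_cond_exp M F (\<lambda>x. exp (X x)) x"
proof -
  interpret prob_space M by fact
  interpret sigma_finite_subalgebra M F
    by (rule finite_measure_subalgebra_is_sigma_finite) (unfold_locales, fact sF)
  show ?thesis
    by (rule real_cond_exp_jensens_inequality(2)[of X UNIV, OF X _ _ eX exp_convex]) auto
qed

lemma jensen_exp_neg:
  assumes P: "prob_space M" and sF: "subalgebra M F" and X: "integrable M X"
    and eX: "integrable M (\<lambda>x. exp (- X x))"
  shows "AE x in M. exp (- real_cond_exp M F X x) \<le> real_cond_exp M F (\<lambda>x. exp (- X x)) x"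
proof -
  interpret prob_space M by fact
  interpret sigma_finite_subalgebra M F
    by (rule finite_measure_subalgebra_is_sigma_finite) (unfold_locales, fact sF)
  have X': "integrable M (\<lambda>x. - X x)" using X by simp
  have "AE x in M. real_cond_exp M F (\<lambda>x. (-1) * X x) x = (-1) * real_cond_exp M F X x"
    by (rule real_cond_exp_cmult[OF X])
  moreover have "AE x in M. exp (real_cond_exp M F (\<lambda>x. - X x) x) \<le> real_cond_exp M F (\<lambda>x. exp (- X x)) x"
    using jensen_exp[OF P sF X' eX] .
  ultimately show ?thesis by eventually_elim simp
qed

lemma integral_pos_prob:
  assumes P: "prob_space M" and g: "integrable M g" and pos: "\<And>x. g x > (0::real)"
  shows "(\<integral>x. g x \<partial>M) > 0"
proof -
  interpret prob_space M by fact
  have ge: "(\<integral>x. g x \<partial>M) \<ge> 0" using pos by (simp add: less_imp_le)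
  have "(\<integral>x. g x \<partial>M) \<noteq> 0"
  proof
    assume "(\<integral>x. g x \<partial>M) = 0"
    then have "AE x in M. g x = 0"
      using integral_nonneg_eq_0_iff_AE[OF g] pos by (simp add: less_imp_le)
    then have "AE x in M. False"
    proof eventually_elim
      fix x assume "g x = 0" with assms(3)[of x] show False by simp
    qed
    then show False by (simp add: AE_False)
  qed
  then show ?thesis using ge by simp
qed


theorem lemma4p1:
  fixes M :: "'a measure"
    and \<eta> :: "nat \<Rightarrow> int ^ 'd::finite \<Rightarrow> 'a \<Rightarrow> real"
    and \<beta> :: real and n j :: nat and f :: "real ^ 'd \<Rightarrow> real"
  assumes "prob_space M"
    and rv: "\<And>m x. \<eta> m x \<in> borel_measurable M"
    and indep: "prob_space.indep_vars M (\<lambda>_. borel) (\<lambda>(m, x). \<eta> m x) UNIV"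
    and ident: "\<And>m x. distr M borel (\<eta> m x) = distr M borel (\<eta> 0 0)"
    and nonconst: "\<not> (\<exists>c. AE \<omega> in M. \<eta> 0 0 \<omega> = c)"
    and "\<beta> > 0"
    and expmom: "integrable M (\<lambda>\<omega>. exp (\<beta> * \<bar>\<eta> 0 0 \<omega>\<bar>))"
    and "n \<ge> 1"
    and fbdd: "\<exists>B. \<forall>x. f x \<le> B"
    and fnn: "\<And>x. 0 \<le> f x"
    and fpos: "measure_pmf.prob (srw_paths n) {xs. f (emb (srw_pos xs n)) > 0} \<noteq> 0"
    and "1 \<le> j" and "j \<le> n"
  shows "AE \<omega> in M.
     nn_cond_exp M (envF M \<eta> (j - 1))
       (\<lambda>\<omega>. ennreal (exp \<bar>real_cond_exp M (envF M \<eta> j) (\<lambda>\<omega>. ln (Yn \<eta> \<beta> f n \<omega>)) \<omega>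
                         - real_cond_exp M (envF M \<eta> (j - 1)) (\<lambda>\<omega>. ln (Yn \<eta> \<beta> f n \<omega>)) \<omega>\<bar>)) \<omega>
     \<le> ennreal (2 * exp (lam M \<eta> \<beta> + lam M \<eta> (-\<beta>)))"
proof -
  have P: "prob_space M" using assms(1) .
  interpret prob_space M by (rule P)
  have bpos: "\<beta> > 0" using assms(6) .
  have j1: "1 \<le> j" and jn: "j \<le> n" using assms(12,13) by auto
  have nj: "j \<in> {1..n}" using j1 jn by auto
  have eta_meas[measurable]: "\<And>i x. \<eta> i x \<in> borel_measurable M" using rv .

  have distr_int: "integrable M (\<lambda>\<omega>. g (\<eta> i x \<omega>)) = integrable M (\<lambda>\<omega>. g (\<eta> 0 0 \<omega>))"
    and distr_intg: "(\<integral>\<omega>. g (\<eta> i x \<omega>) \<partial>M) = (\<integral>\<omega>. g (\<eta> 0 0 \<omega>) \<partial>M)"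
    if g: "g \<in> borel_measurable borel" for i x and g :: "real \<Rightarrow> real"
  proof -
    have "integrable M (\<lambda>\<omega>. g (\<eta> i x \<omega>)) = integrable (distr M borel (\<eta> i x)) g"
      by (rule integrable_distr_eq[symmetric]) (use g in auto)
    also have "... = integrable (distr M borel (\<eta> 0 0)) g" by (subst ident[of i x]) (rule refl)
    also have "... = integrable M (\<lambda>\<omega>. g (\<eta> 0 0 \<omega>))"
      by (rule integrable_distr_eq) (use g in auto)
    finally show "integrable M (\<lambda>\<omega>. g (\<eta> i x \<omega>)) = integrable M (\<lambda>\<omega>. g (\<eta> 0 0 \<omega>))" .
    have "(\<integral>\<omega>. g (\<eta> i x \<omega>) \<partial>M) = integral\<^sup>L (distr M borel (\<eta> i x)) g"
      by (rule integral_distr[symmetric]) (use g in auto)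
    also have "... = integral\<^sup>L (distr M borel (\<eta> 0 0)) g" by (subst ident[of i x]) (rule refl)
    also have "... = (\<integral>\<omega>. g (\<eta> 0 0 \<omega>) \<partial>M)"
      by (rule integral_distr) (use g in auto)
    finally show "(\<integral>\<omega>. g (\<eta> i x \<omega>) \<partial>M) = (\<integral>\<omega>. g (\<eta> 0 0 \<omega>) \<partial>M)" .
  qed
  have int00: "integrable M (\<eta> 0 0)"
  proof (rule Bochner_Integration.integrable_bound)
    show "integrable M (\<lambda>\<omega>. exp (\<beta> * \<bar>\<eta> 0 0 \<omega>\<bar>) / \<beta>)" using expmom by simp
    show "AE \<omega> in M. norm (\<eta> 0 0 \<omega>) \<le> norm (exp (\<beta> * \<bar>\<eta> 0 0 \<omega>\<bar>) / \<beta>)"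
    proof (rule AE_I2)
      fix \<omega>
      have "\<beta> * \<bar>\<eta> 0 0 \<omega>\<bar> \<le> exp (\<beta> * \<bar>\<eta> 0 0 \<omega>\<bar>)"
        using exp_ge_add_one_self[of "\<beta> * \<bar>\<eta> 0 0 \<omega>\<bar>"] by linarith
      then show "norm (\<eta> 0 0 \<omega>) \<le> norm (exp (\<beta> * \<bar>\<eta> 0 0 \<omega>\<bar>) / \<beta>)"
        using bpos by (simp add: field_simps)
    qed
  qed simp
  have int_eta: "integrable M (\<eta> i x)" for i x
    using distr_int[of "\<lambda>t. t" i x] int00 by simp
  have int_exp00: "integrable M (\<lambda>\<omega>. exp (s * \<eta> 0 0 \<omega>))" if s: "\<bar>s\<bar> \<le> \<beta>" for s
  proof (rule Bochner_Integration.integrable_bound[OF expmom])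
    show "AE \<omega> in M. norm (exp (s * \<eta> 0 0 \<omega>)) \<le> norm (exp (\<beta> * \<bar>\<eta> 0 0 \<omega>\<bar>))"
    proof (rule AE_I2)
      fix \<omega>
      have "s * \<eta> 0 0 \<omega> \<le> \<bar>s\<bar> * \<bar>\<eta> 0 0 \<omega>\<bar>" by (metis abs_ge_self abs_mult)
      also have "... \<le> \<beta> * \<bar>\<eta> 0 0 \<omega>\<bar>" using s by (simp add: mult_right_mono)
      finally show "norm (exp (s * \<eta> 0 0 \<omega>)) \<le> norm (exp (\<beta> * \<bar>\<eta> 0 0 \<omega>\<bar>))" by simp
    qed
  qed simp
  have int_exp: "integrable M (\<lambda>\<omega>. exp (s * \<eta> i x \<omega>))" if s: "\<bar>s\<bar> \<le> \<beta>" for s i x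
    using distr_int[of "\<lambda>t. exp (s * t)" i x] int_exp00[OF s] by simp
  have val_exp: "(\<integral>\<omega>. exp (s * \<eta> i x \<omega>) \<partial>M) = exp (lam M \<eta> s)" if s: "\<bar>s\<bar> \<le> \<beta>" for s i x
  proof -
    have "(\<integral>\<omega>. exp (s * \<eta> 0 0 \<omega>) \<partial>M) > 0"
      by (rule integral_pos_prob[OF P int_exp00[OF s]]) simp
    then show ?thesis
      unfolding lam_def using distr_intg[of "\<lambda>t. exp (s * t)" i x] by simp
  qed

  define PS where "PS = {xs :: (int ^ 'd) list. length xs = n \<and> set xs \<subseteq> srw_steps}"
  have finS: "finite (srw_steps :: (int ^ 'd) set)"
  proof -
    have "(srw_steps :: (int ^ 'd) set) = range (\<lambda>i. axis i (1::int)) \<union> range (\<lambda>i. axis i (-1))"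
      unfolding srw_steps_def by auto
    then show ?thesis by (metis finite_Un finite_imageI finite_class.finite_UNIV)
  qed
  have finPS: "finite PS" unfolding PS_def using finite_lists_length_eq[OF finS, of n]
    by (simp add: conj_commute)
  have nePS: "PS \<noteq> {}"
  proof -
    have "replicate n (axis undefined 1) \<in> PS" unfolding PS_def srw_steps_def by auto
    then show ?thesis by auto
  qed
  have paths: "srw_paths n = pmf_of_set PS" unfolding srw_paths_def PS_def ..
  obtain p0 where p0: "p0 \<in> PS" "f (emb (srw_pos p0 n)) > 0"
  proof -
    have "measure_pmf.prob (pmf_of_set PS) {xs. f (emb (srw_pos xs n)) > 0} \<noteq> 0"
      using fpos paths by simp
    then have "PS \<inter> {xs. f (emb (srw_pos xs n)) > 0} \<noteq> {}"
      using measure_pmf_of_set[OF nePS finPS] by auto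
    then show ?thesis using that by blast
  qed
  have cardPS: "real (card PS) > 0" using finPS nePS by (simp add: card_gt_0_iff)

  define cst where "cst p = f (emb (srw_pos p n)) / real (card PS)" for p
  define R where "R p \<omega> = (\<Sum>i\<in>{1..n}-{j}. \<eta> i (srw_pos p i) \<omega>)" for p \<omega>
  define Z where "Z p \<omega> = \<eta> j (srw_pos p j) \<omega>" for p \<omega>
  define w where "w p \<omega> = cst p * exp (\<beta> * R p \<omega>)" for p \<omega>
  define Yh where "Yh \<omega> = (\<Sum>p\<in>PS. w p \<omega>)" for \<omega>
  define q where "q p \<omega> = (if p \<in> PS then w p \<omega> / Yh \<omega> else 0)" for p \<omega>
  define SQ where "SQ s \<omega> = (\<Sum>p\<in>PS. q p \<omega> * exp (s * Z p \<omega>))" for s \<omega>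
  define D where "D \<omega> = ln (SQ \<beta> \<omega>)" for \<omega>
  define LH where "LH \<omega> = ln (Yh \<omega>)" for \<omega>

  have cst_nn: "cst p \<ge> 0" for p unfolding cst_def using fnn cardPS by simp
  have cst0: "cst p0 > 0" unfolding cst_def using p0 cardPS by simp
  have w_nn: "w p \<omega> \<ge> 0" for p \<omega> unfolding w_def using cst_nn by simp
  have w0: "w p0 \<omega> > 0" for \<omega> unfolding w_def using cst0 by simp
  have Yh_pos: "Yh \<omega> > 0" for \<omega>
    unfolding Yh_def by (rule sum_pos2[OF finPS p0(1), of "\<lambda>p. w p \<omega>", OF w0]) (simp add: w_nn)
  have w_le: "w p \<omega> \<le> Yh \<omega>" if "p \<in> PS" for p \<omega>
    unfolding Yh_def by (rule member_le_sum[OF that _ finPS]) (simp add: w_nn)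
  have q_nn: "q p \<omega> \<ge> 0" for p \<omega> unfolding q_def using w_nn Yh_pos by (simp add: less_imp_le)
  have q_le1: "q p \<omega> \<le> 1" for p \<omega> unfolding q_def using w_le Yh_pos by (simp add: divide_le_eq_1)
  have q_sum: "(\<Sum>p\<in>PS. q p \<omega>) = 1" for \<omega>
  proof -
    have "(\<Sum>p\<in>PS. q p \<omega>) = (\<Sum>p\<in>PS. w p \<omega> / Yh \<omega>)" unfolding q_def by (rule sum.cong) auto
    also have "... = 1" unfolding sum_divide_distrib[symmetric] using Yh_pos[of \<omega>] by (simp add: Yh_def)
    finally show ?thesis .
  qed
  have q0: "q p0 \<omega> > 0" for \<omega> unfolding q_def using p0 w0 Yh_pos by simp
  have SQ_pos: "SQ s \<omega> > 0" for s \<omega>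
    unfolding SQ_def by (rule sum_pos2[OF finPS p0(1)]) (use q0 q_nn in auto)
  have Yn_eq: "Yn \<eta> \<beta> f n \<omega> = Yh \<omega> * SQ \<beta> \<omega>" for \<omega>
  proof -
    have H: "Hn \<eta> n p \<omega> = Z p \<omega> + R p \<omega>" for p
      unfolding Hn_def Z_def R_def by (rule sum.remove[OF _ nj]) simp
    have "Yn \<eta> \<beta> f n \<omega> = (\<Sum>p\<in>PS. f (emb (srw_pos p n)) * exp (\<beta> * Hn \<eta> n p \<omega>)) / real (card PS)"
      unfolding Yn_def paths by (rule integral_pmf_of_set[OF nePS finPS])
    also have "... = (\<Sum>p\<in>PS. w p \<omega> * exp (\<beta> * Z p \<omega>))"
      unfolding sum_divide_distrib w_def cst_def H
      by (rule sum.cong) (simp_all add: distrib_left exp_add field_simps)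
    also have "... = Yh \<omega> * SQ \<beta> \<omega>"
      unfolding SQ_def sum_distrib_left using Yh_pos[of \<omega>]
      by (intro sum.cong) (simp_all add: q_def)
    finally show ?thesis .
  qed
  have LY_eq: "(\<lambda>\<omega>. ln (Yn \<eta> \<beta> f n \<omega>)) = (\<lambda>\<omega>. D \<omega> + LH \<omega>)"
  proof
    fix \<omega> show "ln (Yn \<eta> \<beta> f n \<omega>) = D \<omega> + LH \<omega>"
      unfolding Yn_eq D_def LH_def using Yh_pos[of \<omega>] SQ_pos[of \<beta> \<omega>] by (simp add: ln_mult)
  qed

  define Gm where "Gm = lay M \<eta> {1..j-1}"
  define Fm where "Fm = lay M \<eta> {1..j}"
  define A where "A = lay M \<eta> {j}"
  define GH where "GH = lay M \<eta> (-{j})"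
  have sGm: "subalgebra M Gm" unfolding Gm_def by (rule lay_sub[OF rv])
  have sFm: "subalgebra M Fm" unfolding Fm_def by (rule lay_sub[OF rv])
  have sA: "subalgebra M A" unfolding A_def by (rule lay_sub[OF rv])
  have sGH: "subalgebra M GH" unfolding GH_def by (rule lay_sub[OF rv])
  have GmGH: "sets Gm \<subseteq> sets GH" unfolding Gm_def GH_def by (rule lay_mono[OF rv]) auto
  have GmFm: "sets Gm \<subseteq> sets Fm" unfolding Gm_def Fm_def by (rule lay_mono[OF rv]) auto
  have indGA: "indep_set (sets GH) (sets A)" unfolding GH_def A_def
    by (rule lay_indep[OF rv P assms(3)]) auto
  have Fgen: "sets Fm = sigma_sets (space M) {g \<inter> a | g a. g \<in> sets Gm \<and> a \<in> sets A}"
  proof -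
    have "{1..j} = {1..j-1} \<union> {j}" using j1 by auto
    then show ?thesis unfolding Fm_def Gm_def A_def using lay_Un[OF rv, where L="{1..j-1}" and L'="{j}"] by simp
  qed
  have subFG: "subalgebra Fm Gm" unfolding subalgebra_def using GmFm
    by (simp add: Gm_def Fm_def lay_space[OF rv])
  have etaGH: "\<eta> i x \<in> borel_measurable GH" if "i \<noteq> j" for i x
    unfolding GH_def by (rule lay_meas[OF rv]) (use that in auto)
  have etaA: "\<eta> j x \<in> borel_measurable A" for x
    unfolding A_def by (rule lay_meas[OF rv]) auto
  have R_GH[measurable]: "R p \<in> borel_measurable GH" for p
    unfolding R_def by (rule borel_measurable_sum) (auto intro: etaGH)
  have Z_A[measurable]: "Z p \<in> borel_measurable A" for p
    unfolding Z_def by (rule etaA)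
  have w_GH[measurable]: "w p \<in> borel_measurable GH" for p
    unfolding w_def by measurable
  have Yh_GH[measurable]: "Yh \<in> borel_measurable GH"
    unfolding Yh_def by (rule borel_measurable_sum) simp
  have q_GH[measurable]: "q p \<in> borel_measurable GH" for p
    unfolding q_def by (cases "p \<in> PS") simp_all
  have LH_GH[measurable]: "LH \<in> borel_measurable GH"
    unfolding LH_def by measurable
  have R_M[measurable]: "R p \<in> borel_measurable M" for p using measurable_from_subalg[OF sGH R_GH] .
  have Z_M[measurable]: "Z p \<in> borel_measurable M" for p using measurable_from_subalg[OF sA Z_A] .
  have q_M[measurable]: "q p \<in> borel_measurable M" for p using measurable_from_subalg[OF sGH q_GH] .
  have Yh_M[measurable]: "Yh \<in> borel_measurable M" using measurable_from_subalg[OF sGH Yh_GH] .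
  have LH_M[measurable]: "LH \<in> borel_measurable M" using measurable_from_subalg[OF sGH LH_GH] .
  have SQ_M[measurable]: "SQ s \<in> borel_measurable M" for s unfolding SQ_def by measurable
  have D_M[measurable]: "D \<in> borel_measurable M" unfolding D_def by measurable

  have intR: "integrable M (R p)" for p unfolding R_def by (rule Bochner_Integration.integrable_sum) (rule int_eta)
  have intZ: "integrable M (Z p)" for p unfolding Z_def by (rule int_eta)
  have expZ: "integrable M (\<lambda>\<omega>. exp (s * Z p \<omega>))" if "\<bar>s\<bar> \<le> \<beta>" for s p
    unfolding Z_def by (rule int_exp[OF that])
  have valZ: "(\<integral>\<omega>. exp (s * Z p \<omega>) \<partial>M) = exp (lam M \<eta> s)" if "\<bar>s\<bar> \<le> \<beta>" for s p
    unfolding Z_def by (rule val_exp[OF that])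
  have int_q: "integrable M (q p)" for p
    by (rule integrable_const_bound[where B=1]) (use q_nn q_le1 in auto)
  have int_qe: "integrable M (\<lambda>\<omega>. q p \<omega> * exp (s * Z p \<omega>))" if s: "\<bar>s\<bar> \<le> \<beta>" for s p
  proof (rule Bochner_Integration.integrable_bound[OF expZ[OF s]])
    show "AE \<omega> in M. norm (q p \<omega> * exp (s * Z p \<omega>)) \<le> norm (exp (s * Z p \<omega>))"
      using q_nn q_le1 by (intro AE_I2) (simp add: abs_mult mult_left_le_one_le)
  qed simp
  have int_SQ: "integrable M (SQ s)" if s: "\<bar>s\<bar> \<le> \<beta>" for s
    unfolding SQ_def by (rule Bochner_Integration.integrable_sum) (rule int_qe[OF s])
  have D_bd: "\<bar>D \<omega>\<bar> \<le> \<beta> * (\<Sum>p\<in>PS. \<bar>Z p \<omega>\<bar>)" for \<omega>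
  proof -
    define T where "T = (\<Sum>p\<in>PS. \<bar>Z p \<omega>\<bar>)"
    have ZT: "\<bar>Z p \<omega>\<bar> \<le> T" if "p \<in> PS" for p
      unfolding T_def by (rule member_le_sum[OF that _ finPS]) simp
    have lo: "exp (- (\<beta> * T)) \<le> SQ \<beta> \<omega>" unfolding SQ_def
    proof (rule conv_lo[OF finPS])
      fix p assume "p \<in> PS"
      then have h: "- T \<le> Z p \<omega>" using ZT[of p] by linarith
      show "exp (- (\<beta> * T)) \<le> exp (\<beta> * Z p \<omega>)"
        using mult_left_mono[OF h less_imp_le[OF bpos]] by simp
    qed (use q_nn q_sum in auto)
    have hi: "SQ \<beta> \<omega> \<le> exp (\<beta> * T)" unfolding SQ_def
    proof (rule conv_hi[OF finPS])
      fix p assume "p \<in> PS"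
      then have h: "Z p \<omega> \<le> T" using ZT[of p] by linarith
      show "exp (\<beta> * Z p \<omega>) \<le> exp (\<beta> * T)"
        using mult_left_mono[OF h less_imp_le[OF bpos]] by simp
    qed (use q_nn q_sum in auto)
    have "- (\<beta> * T) \<le> D \<omega>" unfolding D_def using lo SQ_pos[of \<beta> \<omega>]
      by (metis ln_exp ln_le_cancel_iff exp_gt_zero)
    moreover have "D \<omega> \<le> \<beta> * T" unfolding D_def using hi SQ_pos[of \<beta> \<omega>]
      by (metis ln_exp ln_le_cancel_iff exp_gt_zero)
    ultimately show ?thesis unfolding T_def by linarith
  qed
  have int_D: "integrable M D"
  proof (rule Bochner_Integration.integrable_bound)
    show "integrable M (\<lambda>\<omega>. \<beta> * (\<Sum>p\<in>PS. \<bar>Z p \<omega>\<bar>))"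
      by (intro Bochner_Integration.integrable_mult_right Bochner_Integration.integrable_sum Bochner_Integration.integrable_abs intZ)
    show "AE \<omega> in M. norm (D \<omega>) \<le> norm (\<beta> * (\<Sum>p\<in>PS. \<bar>Z p \<omega>\<bar>))"
    proof (rule AE_I2)
      fix \<omega>
      have "0 \<le> \<beta> * (\<Sum>p\<in>PS. \<bar>Z p \<omega>\<bar>)" using bpos by (simp add: sum_nonneg)
      then show "norm (D \<omega>) \<le> norm (\<beta> * (\<Sum>p\<in>PS. \<bar>Z p \<omega>\<bar>))" using D_bd[of \<omega>] by simp
    qed
  qed simp
  define C where "C = (\<Sum>p\<in>PS. cst p)"
  have C_pos: "C > 0" unfolding C_def by (rule sum_pos2[OF finPS p0(1), of cst, OF cst0]) (simp add: cst_nn)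
  have LH_bd: "\<bar>LH \<omega>\<bar> \<le> \<bar>ln C\<bar> + \<bar>ln (cst p0)\<bar> + \<beta> * (\<Sum>p\<in>PS. \<bar>R p \<omega>\<bar>)" for \<omega>
  proof -
    define T where "T = (\<Sum>p\<in>PS. \<bar>R p \<omega>\<bar>)"
    have RT: "\<bar>R p \<omega>\<bar> \<le> T" if "p \<in> PS" for p
      unfolding T_def by (rule member_le_sum[OF that _ finPS]) simp
    have "Yh \<omega> \<le> (\<Sum>p\<in>PS. cst p * exp (\<beta> * T))" unfolding Yh_def w_def
    proof (rule sum_mono)
      fix p assume "p \<in> PS"
      then have h: "R p \<omega> \<le> T" using RT[of p] by linarith
      show "cst p * exp (\<beta> * R p \<omega>) \<le> cst p * exp (\<beta> * T)"
        using mult_left_mono[OF h less_imp_le[OF bpos]] cst_nn[of p] by (simp add: mult_left_mono)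
    qed
    also have "... = C * exp (\<beta> * T)" unfolding C_def by (simp add: sum_distrib_right)
    finally have up: "Yh \<omega> \<le> C * exp (\<beta> * T)" .
    have "cst p0 * exp (- (\<beta> * T)) \<le> w p0 \<omega>" unfolding w_def
    proof -
      have h: "- T \<le> R p0 \<omega>" using RT[OF p0(1)] by linarith
      then have "exp (- (\<beta> * T)) \<le> exp (\<beta> * R p0 \<omega>)" using mult_left_mono[OF h less_imp_le[OF bpos]] by simp
      then show "cst p0 * exp (- (\<beta> * T)) \<le> cst p0 * exp (\<beta> * R p0 \<omega>)"
        using cst0 by (simp add: mult_left_mono)
    qed
    also have "... \<le> Yh \<omega>" using w_le[OF p0(1)] .
    finally have lo: "cst p0 * exp (- (\<beta> * T)) \<le> Yh \<omega>" .
    have "LH \<omega> \<le> ln C + \<beta> * T"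
    proof -
      have "LH \<omega> \<le> ln (C * exp (\<beta> * T))" unfolding LH_def using up Yh_pos[of \<omega>] by simp
      also have "... = ln C + \<beta> * T" using C_pos by (simp add: ln_mult)
      finally show ?thesis .
    qed
    moreover have "ln (cst p0) - \<beta> * T \<le> LH \<omega>"
    proof -
      have "ln (cst p0) - \<beta> * T = ln (cst p0 * exp (- (\<beta> * T)))" using cst0 by (simp add: ln_mult)
      also have "... \<le> LH \<omega>" unfolding LH_def using lo cst0
        by (subst ln_le_cancel_iff) (simp_all add: Yh_pos)
      finally show ?thesis .
    qed
    ultimately show ?thesis unfolding T_def by linarith
  qed
  have int_LH: "integrable M LH"
  proof (rule Bochner_Integration.integrable_bound)
    show "integrable M (\<lambda>\<omega>. \<bar>ln C\<bar> + \<bar>ln (cst p0)\<bar> + \<beta> * (\<Sum>p\<in>PS. \<bar>R p \<omega>\<bar>))"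
      by (intro Bochner_Integration.integrable_add integrable_const Bochner_Integration.integrable_mult_right Bochner_Integration.integrable_sum Bochner_Integration.integrable_abs intR)
    show "AE \<omega> in M. norm (LH \<omega>) \<le> norm (\<bar>ln C\<bar> + \<bar>ln (cst p0)\<bar> + \<beta> * (\<Sum>p\<in>PS. \<bar>R p \<omega>\<bar>))"
    proof (rule AE_I2)
      fix \<omega>
      have "0 \<le> \<beta> * (\<Sum>p\<in>PS. \<bar>R p \<omega>\<bar>)" using bpos by (simp add: sum_nonneg)
      then show "norm (LH \<omega>) \<le> norm (\<bar>ln C\<bar> + \<bar>ln (cst p0)\<bar> + \<beta> * (\<Sum>p\<in>PS. \<bar>R p \<omega>\<bar>))"
        using LH_bd[of \<omega>] by simp
    qed
  qed simp
  have expD: "exp (D \<omega>) = SQ \<beta> \<omega>" for \<omega> unfolding D_def using SQ_pos by simp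
  have expmD_le: "exp (- D \<omega>) \<le> SQ (-\<beta>) \<omega>" for \<omega>
  proof -
    have "exp (- D \<omega>) = inverse (\<Sum>p\<in>PS. q p \<omega> * exp (\<beta> * Z p \<omega>))"
      using expD[of \<omega>] by (simp add: exp_minus SQ_def)
    also have "... \<le> (\<Sum>p\<in>PS. q p \<omega> * inverse (exp (\<beta> * Z p \<omega>)))"
      by (rule inv_sum_le[OF finPS nePS]) (use q_nn q_sum in auto)
    also have "... = SQ (-\<beta>) \<omega>" unfolding SQ_def by (simp add: exp_minus)
    finally show ?thesis .
  qed
  have int_eD: "integrable M (\<lambda>\<omega>. exp (D \<omega>))" unfolding expD using int_SQ[of \<beta>] bpos by simp
  have int_emD: "integrable M (\<lambda>\<omega>. exp (- D \<omega>))"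
  proof (rule Bochner_Integration.integrable_bound[OF int_SQ[of "-\<beta>"]], use bpos in simp)
    show "AE \<omega> in M. norm (exp (- D \<omega>)) \<le> norm (SQ (-\<beta>) \<omega>)"
      using expmD_le by (intro AE_I2) (simp, metis abs_ge_self order.trans)
  qed simp_all

  interpret Gm: sigma_finite_subalgebra M Gm
    by (rule finite_measure_subalgebra_is_sigma_finite) (unfold_locales, fact sGm)
  interpret Fm: sigma_finite_subalgebra M Fm
    by (rule finite_measure_subalgebra_is_sigma_finite) (unfold_locales, fact sFm)
  have LH_eq: "AE \<omega> in M. real_cond_exp M Fm LH \<omega> = real_cond_exp M Gm LH \<omega>"
  proof -
    have "AE \<omega> in M. real_cond_exp M Fm (\<lambda>x. LH x * 1) \<omega> = real_cond_exp M Gm LH \<omega> * 1"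
      by (rule cond_exp_indep_K1[OF P sGm sGH sA sFm GmGH indGA Fgen LH_GH int_LH]) simp_all
    then show ?thesis by simp
  qed
  define a where "a = real_cond_exp M Fm D"
  define b where "b = real_cond_exp M Gm D"
  have a_M[measurable]: "a \<in> borel_measurable M" unfolding a_def by simp
  have b_M[measurable]: "b \<in> borel_measurable M" unfolding b_def by simp
  have b_G[measurable]: "b \<in> borel_measurable Gm" unfolding b_def by simp
  have V_eq: "AE \<omega> in M. real_cond_exp M Fm (\<lambda>\<omega>. ln (Yn \<eta> \<beta> f n \<omega>)) \<omega>
      - real_cond_exp M Gm (\<lambda>\<omega>. ln (Yn \<eta> \<beta> f n \<omega>)) \<omega> = a \<omega> - b \<omega>"
    using Fm.real_cond_exp_add[OF int_D int_LH] Gm.real_cond_exp_add[OF int_D int_LH] LH_eq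
    unfolding LY_eq a_def b_def by eventually_elim simp

  have SQ_ce: "AE \<omega> in M. real_cond_exp M Gm (SQ s) \<omega> = exp (lam M \<eta> s)" if s: "\<bar>s\<bar> \<le> \<beta>" for s
  proof -
    have sumce: "AE \<omega> in M. real_cond_exp M Gm (\<lambda>\<omega>. \<Sum>p\<in>PS. q p \<omega> * exp (s * Z p \<omega>)) \<omega>
        = (\<Sum>p\<in>PS. real_cond_exp M Gm (\<lambda>\<omega>. q p \<omega> * exp (s * Z p \<omega>)) \<omega>)"
      by (rule Gm.real_cond_exp_sum) (rule int_qe[OF s])
    have each: "AE \<omega> in M. \<forall>p\<in>PS. real_cond_exp M Gm (\<lambda>\<omega>. q p \<omega> * exp (s * Z p \<omega>)) \<omega>
        = real_cond_exp M Gm (q p) \<omega> * exp (lam M \<eta> s)"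
    proof (rule AE_finite_allI[OF finPS])
      fix p
      have vA: "(\<lambda>\<omega>. exp (s * Z p \<omega>)) \<in> borel_measurable A" by measurable
      show "AE \<omega> in M. real_cond_exp M Gm (\<lambda>\<omega>. q p \<omega> * exp (s * Z p \<omega>)) \<omega>
        = real_cond_exp M Gm (q p) \<omega> * exp (lam M \<eta> s)"
        using cond_exp_indep_K2(2)[OF P sGm sGH sA GmGH indGA q_GH int_q vA expZ[OF s]] valZ[OF s]
        by simp
    qed
    have qsum: "AE \<omega> in M. real_cond_exp M Gm (\<lambda>\<omega>. \<Sum>p\<in>PS. q p \<omega>) \<omega>
        = (\<Sum>p\<in>PS. real_cond_exp M Gm (q p) \<omega>)"
      by (rule Gm.real_cond_exp_sum) (rule int_q)
    have one: "AE \<omega> in M. real_cond_exp M Gm (\<lambda>\<omega>. 1) \<omega> = 1"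
      by (rule Gm.real_cond_exp_F_meas) simp_all
    have qs1: "(\<lambda>\<omega>. \<Sum>p\<in>PS. q p \<omega>) = (\<lambda>\<omega>. 1)" using q_sum by simp
    show ?thesis using sumce each qsum one unfolding qs1 SQ_def
    proof eventually_elim
      case (elim \<omega>)
      have "(\<Sum>p\<in>PS. real_cond_exp M Gm (\<lambda>\<omega>. q p \<omega> * exp (s * Z p \<omega>)) \<omega>)
          = (\<Sum>p\<in>PS. real_cond_exp M Gm (q p) \<omega> * exp (lam M \<eta> s))"
        using elim(2) by (intro sum.cong) auto
      also have "... = exp (lam M \<eta> s)" using elim(3,4) by (simp add: sum_distrib_right[symmetric])
      finally show ?case using elim(1) by simp
    qed
  qed
  have eD_ce: "AE \<omega> in M. real_cond_exp M Gm (\<lambda>x. exp (D x)) \<omega> = exp (lam M \<eta> \<beta>)"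
  proof -
    have "(\<lambda>x. exp (D x)) = SQ \<beta>" using expD by auto
    then show ?thesis using SQ_ce[of \<beta>] bpos by simp
  qed
  have emD_ce: "AE \<omega> in M. real_cond_exp M Gm (\<lambda>x. exp (- D x)) \<omega> \<le> exp (lam M \<eta> (-\<beta>))"
  proof -
    have "AE \<omega> in M. real_cond_exp M Gm (\<lambda>x. exp (- D x)) \<omega> \<le> real_cond_exp M Gm (SQ (-\<beta>)) \<omega>"
      by (rule Gm.real_cond_exp_mono[OF AE_I2[OF expmD_le] int_emD int_SQ]) (use bpos in simp)
    moreover have "AE \<omega> in M. real_cond_exp M Gm (SQ (-\<beta>)) \<omega> = exp (lam M \<eta> (-\<beta>))"
      using SQ_ce[of "-\<beta>"] bpos by simp
    ultimately show ?thesis by eventually_elim simp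
  qed
  have J_aF: "AE \<omega> in M. exp (a \<omega>) \<le> real_cond_exp M Fm (\<lambda>x. exp (D x)) \<omega>"
    unfolding a_def by (rule jensen_exp[OF P sFm int_D int_eD])
  have J_amF: "AE \<omega> in M. exp (- a \<omega>) \<le> real_cond_exp M Fm (\<lambda>x. exp (- D x)) \<omega>"
    unfolding a_def by (rule jensen_exp_neg[OF P sFm int_D int_emD])
  have J_bG: "AE \<omega> in M. exp (b \<omega>) \<le> real_cond_exp M Gm (\<lambda>x. exp (D x)) \<omega>"
    unfolding b_def by (rule jensen_exp[OF P sGm int_D int_eD])
  have J_bmG: "AE \<omega> in M. exp (- b \<omega>) \<le> real_cond_exp M Gm (\<lambda>x. exp (- D x)) \<omega>"
    unfolding b_def by (rule jensen_exp_neg[OF P sGm int_D int_emD])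
  have nnF_eD: "AE \<omega> in M. nn_cond_exp M Fm (\<lambda>x. ennreal (exp (D x))) \<omega> = ennreal (real_cond_exp M Fm (\<lambda>x. exp (D x)) \<omega>)"
    by (rule nn_real_cond_exp[OF P sFm int_eD]) simp
  have nnF_emD: "AE \<omega> in M. nn_cond_exp M Fm (\<lambda>x. ennreal (exp (- D x))) \<omega> = ennreal (real_cond_exp M Fm (\<lambda>x. exp (- D x)) \<omega>)"
    by (rule nn_real_cond_exp[OF P sFm int_emD]) simp
  have nnG_eD: "AE \<omega> in M. nn_cond_exp M Gm (\<lambda>x. ennreal (exp (D x))) \<omega> = ennreal (real_cond_exp M Gm (\<lambda>x. exp (D x)) \<omega>)"
    by (rule nn_real_cond_exp[OF P sGm int_eD]) simp
  have nnG_emD: "AE \<omega> in M. nn_cond_exp M Gm (\<lambda>x. ennreal (exp (- D x))) \<omega> = ennreal (real_cond_exp M Gm (\<lambda>x. exp (- D x)) \<omega>)"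
    by (rule nn_real_cond_exp[OF P sGm int_emD]) simp
  have nest_eD: "AE \<omega> in M. nn_cond_exp M Gm (\<lambda>x. ennreal (exp (D x))) \<omega>
      = nn_cond_exp M Gm (nn_cond_exp M Fm (\<lambda>x. ennreal (exp (D x)))) \<omega>"
    by (rule Gm.nn_cond_exp_nested_subalg[OF sFm subFG]) simp
  have nest_emD: "AE \<omega> in M. nn_cond_exp M Gm (\<lambda>x. ennreal (exp (- D x))) \<omega>
      = nn_cond_exp M Gm (nn_cond_exp M Fm (\<lambda>x. ennreal (exp (- D x)))) \<omega>"
    by (rule Gm.nn_cond_exp_nested_subalg[OF sFm subFG]) simp
  have mono_a: "AE \<omega> in M. nn_cond_exp M Gm (\<lambda>x. ennreal (exp (a x))) \<omega>
      \<le> nn_cond_exp M Gm (nn_cond_exp M Fm (\<lambda>x. ennreal (exp (D x)))) \<omega>"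
  proof (rule Gm.nn_cond_exp_mono)
    show "AE x in M. ennreal (exp (a x)) \<le> nn_cond_exp M Fm (\<lambda>x. ennreal (exp (D x))) x"
      using J_aF nnF_eD by eventually_elim (simp add: ennreal_leI)
  qed simp_all
  have mono_ma: "AE \<omega> in M. nn_cond_exp M Gm (\<lambda>x. ennreal (exp (- a x))) \<omega>
      \<le> nn_cond_exp M Gm (nn_cond_exp M Fm (\<lambda>x. ennreal (exp (- D x)))) \<omega>"
  proof (rule Gm.nn_cond_exp_mono)
    show "AE x in M. ennreal (exp (- a x)) \<le> nn_cond_exp M Fm (\<lambda>x. ennreal (exp (- D x))) x"
      using J_amF nnF_emD by eventually_elim (simp add: ennreal_leI)
  qed simp_all
  have prod1: "AE \<omega> in M. ennreal (exp (- b \<omega>)) * nn_cond_exp M Gm (\<lambda>x. ennreal (exp (a x))) \<omega>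
      = nn_cond_exp M Gm (\<lambda>x. ennreal (exp (- b x)) * ennreal (exp (a x))) \<omega>"
    by (rule Gm.nn_cond_exp_prod) simp_all
  have prod2: "AE \<omega> in M. ennreal (exp (b \<omega>)) * nn_cond_exp M Gm (\<lambda>x. ennreal (exp (- a x))) \<omega>
      = nn_cond_exp M Gm (\<lambda>x. ennreal (exp (b x)) * ennreal (exp (- a x))) \<omega>"
    by (rule Gm.nn_cond_exp_prod) simp_all
  have sum12: "AE \<omega> in M. nn_cond_exp M Gm (\<lambda>x. ennreal (exp (- b x)) * ennreal (exp (a x))) \<omega>
      + nn_cond_exp M Gm (\<lambda>x. ennreal (exp (b x)) * ennreal (exp (- a x))) \<omega>
      = nn_cond_exp M Gm (\<lambda>x. ennreal (exp (- b x)) * ennreal (exp (a x)) + ennreal (exp (b x)) * ennreal (exp (- a x))) \<omega>"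
    by (rule Gm.nn_cond_exp_sum) simp_all
  have mono_main: "AE \<omega> in M. nn_cond_exp M Gm (\<lambda>x. ennreal (exp \<bar>a x - b x\<bar>)) \<omega>
      \<le> nn_cond_exp M Gm (\<lambda>x. ennreal (exp (- b x)) * ennreal (exp (a x)) + ennreal (exp (b x)) * ennreal (exp (- a x))) \<omega>"
  proof (rule Gm.nn_cond_exp_mono)
    show "AE x in M. ennreal (exp \<bar>a x - b x\<bar>) \<le> ennreal (exp (- b x)) * ennreal (exp (a x)) + ennreal (exp (b x)) * ennreal (exp (- a x))"
    proof (rule AE_I2)
      fix x
      have r: "exp \<bar>a x - b x\<bar> \<le> exp (- b x) * exp (a x) + exp (b x) * exp (- a x)"
      proof -
        have "exp (- b x) * exp (a x) = exp (a x - b x)" "exp (b x) * exp (- a x) = exp (- (a x - b x))"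
          by (simp_all add: exp_add[symmetric])
        moreover have "exp \<bar>t\<bar> \<le> exp t + exp (- t)" for t :: real
          by (cases "t \<ge> 0") (simp_all add: add_increasing2 add_increasing)
        ultimately show ?thesis by (metis minus_diff_eq)
      qed
      show "ennreal (exp \<bar>a x - b x\<bar>) \<le> ennreal (exp (- b x)) * ennreal (exp (a x)) + ennreal (exp (b x)) * ennreal (exp (- a x))"
        using ennreal_leI[OF r] by (simp add: ennreal_mult)
    qed
  qed simp_all
  have envG: "envF M \<eta> (j - 1) = Gm" and envF: "envF M \<eta> j = Fm"
    by (simp_all add: envF_lay Gm_def Fm_def)
  have cong: "AE \<omega> in M. nn_cond_exp M Gm
       (\<lambda>\<omega>. ennreal (exp \<bar>real_cond_exp M Fm (\<lambda>\<omega>. ln (Yn \<eta> \<beta> f n \<omega>)) \<omega>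
                         - real_cond_exp M Gm (\<lambda>\<omega>. ln (Yn \<eta> \<beta> f n \<omega>)) \<omega>\<bar>)) \<omega>
      = nn_cond_exp M Gm (\<lambda>x. ennreal (exp \<bar>a x - b x\<bar>)) \<omega>"
    by (rule Gm.nn_cond_exp_cong) (use V_eq in \<open>auto elim: AE_mp\<close>)
  show ?thesis unfolding envG envF
    using cong mono_main sum12 prod1 prod2 mono_a mono_ma nest_eD nest_emD nnG_eD nnG_emD
      eD_ce emD_ce J_bG J_bmG
  proof eventually_elim
    case (elim \<omega>)
    let ?la = "lam M \<eta> \<beta>" and ?lb = "lam M \<eta> (-\<beta>)"
    have t1: "nn_cond_exp M Gm (\<lambda>x. ennreal (exp (a x))) \<omega> \<le> ennreal (exp ?la)"
      using elim(6) elim(8) elim(10) elim(12) by simp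
    have t2: "nn_cond_exp M Gm (\<lambda>x. ennreal (exp (- a x))) \<omega> \<le> ennreal (exp ?lb)"
    proof -
      have "ennreal (real_cond_exp M Gm (\<lambda>x. exp (- D x)) \<omega>) \<le> ennreal (exp ?lb)"
        using elim(13) by (rule ennreal_leI)
      then show ?thesis using elim(7) elim(9) elim(11) by (metis order_trans)
    qed
    have t3: "ennreal (exp (- b \<omega>)) \<le> ennreal (exp ?lb)"
      using elim(15) elim(13) by (intro ennreal_leI) linarith
    have t4: "ennreal (exp (b \<omega>)) \<le> ennreal (exp ?la)"
      using elim(14) elim(12) by (intro ennreal_leI) linarith
    have "nn_cond_exp M Gm (\<lambda>\<omega>. ennreal (exp \<bar>real_cond_exp M Fm (\<lambda>\<omega>. ln (Yn \<eta> \<beta> f n \<omega>)) \<omega>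
                         - real_cond_exp M Gm (\<lambda>\<omega>. ln (Yn \<eta> \<beta> f n \<omega>)) \<omega>\<bar>)) \<omega>
        \<le> ennreal (exp (- b \<omega>)) * nn_cond_exp M Gm (\<lambda>x. ennreal (exp (a x))) \<omega>
          + ennreal (exp (b \<omega>)) * nn_cond_exp M Gm (\<lambda>x. ennreal (exp (- a x))) \<omega>"
      using elim(1-5) by simp
    also have "... \<le> ennreal (exp ?lb) * ennreal (exp ?la) + ennreal (exp ?la) * ennreal (exp ?lb)"
      by (intro add_mono mult_mono t1 t2 t3 t4) simp_all
    also have "... = ennreal (2 * exp (?la + ?lb))"
      by (simp add: ennreal_mult[symmetric] exp_add mult.commute ennreal_plus[symmetric] del: ennreal_plus)
    finally show ?case .
  qed
qed


end
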